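(* The policy Match the Longest is non-expansive: for all $x,x'\in\mathbb X$, all $v\in\mathcal V$ and all $\sigma\in\mathcal S$, $$\|x'\circledcirc_{\textsc{ml}}(v,\sigma)-x\circledcirc_{\textsc{ml}}(v,\sigma)\|_1\le\|x'-x\|_1.$$
   Context: $G=(\mathcal V,\mathcal E)$ is a finite connected simple graph, $i - j$ denotes adjacency, $\mathcal E(v)$ the neighbours of $v$. $\mathbb X=\{x\in\mathbb N^{\mathcal V}: x(i)x(j)=0 \text{ whenever } i - j\}$. A list of preferences $\sigma=(\sigma(i))_{i\in\mathcal V}\in\mathcal S$ gives for each class $i$ a linear ordering $\sigma(i)$ of $\mathcal E(i)$; for ML these are drawn uniformly on $\mathcal S$. With $\mathcal P(x,v)=\{j\in\mathcal E(v):x(j)>0\}$, set $x\circledcirc_{\textsc{ml}}(v,\sigma)=x+\mathbf e_v$ if $\mathcal P(x,v)=\emptyset$, and $x-\mathbf e_{p(x,v,\sigma)}$ otherwise, where $\mathbf e_i$ is the $i$-th canonical basis vector and $p(x,v,\sigma)$ is the first element, in the ordering $\sigma(v)$, of $\mathcal L(x,v)=\{i\in\mathcal E(v):x(i)=\max_{j\in\mathcal E(v)}x(j)\}$. *)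

theory Defs
  imports Main
begin

definition simple_graph :: "'v set \<Rightarrow> ('v \<Rightarrow> 'v \<Rightarrow> bool) \<Rightarrow> bool" where
  "simple_graph V E \<longleftrightarrow> finite V \<and> V \<noteq> {} \<and>
     (\<forall>i j. E i j \<longrightarrow> i \<in> V \<and> j \<in> V) \<and>
     (\<forall>i j. E i j \<longrightarrow> E j i) \<and> (\<forall>i. \<not> E i i)"

definition connected_graph :: "'v set \<Rightarrow> ('v \<Rightarrow> 'v \<Rightarrow> bool) \<Rightarrow> bool" where
  "connected_graph V E \<longleftrightarrow> (\<forall>i\<in>V. \<forall>j\<in>V. E\<^sup>*\<^sup>* i j)"

definition nbrs :: "'v set \<Rightarrow> ('v \<Rightarrow> 'v \<Rightarrow> bool) \<Rightarrow> 'v \<Rightarrow> 'v set" where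
  "nbrs V E v = {j \<in> V. E v j}"

definition states :: "'v set \<Rightarrow> ('v \<Rightarrow> 'v \<Rightarrow> bool) \<Rightarrow> ('v \<Rightarrow> nat) set" where
  "states V E = {x. (\<forall>i. i \<notin> V \<longrightarrow> x i = 0) \<and> (\<forall>i j. E i j \<longrightarrow> x i * x j = 0)}"

(* \<S>: for each class i, sigma i is a linear ordering of \<E>(i), given as a
   duplicate-free list enumerating \<E>(i) (earlier = preferred). *)
definition prefs :: "'v set \<Rightarrow> ('v \<Rightarrow> 'v \<Rightarrow> bool) \<Rightarrow> ('v \<Rightarrow> 'v list) set" where
  "prefs V E = {\<sigma>. \<forall>i\<in>V. distinct (\<sigma> i) \<and> set (\<sigma> i) = nbrs V E i}"

definition Pset :: "'v set \<Rightarrow> ('v \<Rightarrow> 'v \<Rightarrow> bool) \<Rightarrow> ('v \<Rightarrow> nat) \<Rightarrow> 'v \<Rightarrow> 'v set" where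
  "Pset V E x v = {j \<in> nbrs V E v. x j > 0}"

definition Lset :: "'v set \<Rightarrow> ('v \<Rightarrow> 'v \<Rightarrow> bool) \<Rightarrow> ('v \<Rightarrow> nat) \<Rightarrow> 'v \<Rightarrow> 'v set" where
  "Lset V E x v = {i \<in> nbrs V E v. x i = Max (x ` nbrs V E v)}"

definition pML :: "'v set \<Rightarrow> ('v \<Rightarrow> 'v \<Rightarrow> bool) \<Rightarrow> ('v \<Rightarrow> nat) \<Rightarrow> 'v \<Rightarrow> ('v \<Rightarrow> 'v list) \<Rightarrow> 'v" where
  "pML V E x v \<sigma> = hd (filter (\<lambda>i. i \<in> Lset V E x v) (\<sigma> v))"

definition ml_step :: "'v set \<Rightarrow> ('v \<Rightarrow> 'v \<Rightarrow> bool) \<Rightarrow> ('v \<Rightarrow> nat) \<Rightarrow> 'v \<Rightarrow> ('v \<Rightarrow> 'v list) \<Rightarrow> ('v \<Rightarrow> nat)" where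
  "ml_step V E x v \<sigma> =
     (if Pset V E x v = {} then x(v := x v + 1)
      else (let p = pML V E x v \<sigma> in x(p := x p - 1)))"

definition diff1 :: "'v set \<Rightarrow> ('v \<Rightarrow> nat) \<Rightarrow> ('v \<Rightarrow> nat) \<Rightarrow> int" where
  "diff1 V x y = (\<Sum>i\<in>V. \<bar>int (x i) - int (y i)\<bar>)"

end

theory Submission
  imports Defs
begin

lemma hd_filter_eq:
  assumes "filter P xs \<noteq> []" "filter Q xs \<noteq> []"
    "Q (hd (filter P xs))" "P (hd (filter Q xs))"
  shows "hd (filter P xs) = hd (filter Q xs)"
  using assms by (induction xs) (auto split: if_splits)

lemma sum_two:
  fixes d :: "'a \<Rightarrow> int"
  assumes "finite V" "a \<in> V" "b \<in> V" "a \<noteq> b" "\<forall>i\<in>V. i \<noteq> a \<and> i \<noteq> b \<longrightarrow> d i = 0"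
  shows "sum d V = d a + d b"
proof -
  have "sum d V = d a + sum d (V - {a})" using assms by (simp add: sum.remove)
  also have "sum d (V - {a}) = d b + sum d (V - {a} - {b})" using assms
    by (subst sum.remove[of _ b]) auto
  also have "sum d (V - {a} - {b}) = 0" using assms by (intro sum.neutral) auto
  finally show ?thesis by simp
qed

lemma sum_one:
  fixes d :: "'a \<Rightarrow> int"
  assumes "finite V" "a \<in> V" "\<forall>i\<in>V. i \<noteq> a \<longrightarrow> d i = 0"
  shows "sum d V = d a"
proof -
  have "sum d V = d a + sum d (V - {a})" using assms by (simp add: sum.remove)
  also have "sum d (V - {a}) = 0" using assms by (intro sum.neutral) auto
  finally show ?thesis by simp
qed

lemma pML_props:
  assumes g: "simple_graph V E" and s: "\<sigma> \<in> prefs V E" and v: "v \<in> V"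
    and P: "Pset V E x v \<noteq> {}"
  shows "pML V E x v \<sigma> \<in> nbrs V E v"
    "pML V E x v \<sigma> \<in> Lset V E x v"
    "x (pML V E x v \<sigma>) > 0"
    "filter (\<lambda>i. i \<in> Lset V E x v) (\<sigma> v) \<noteq> []"
proof -
  have fin: "finite (nbrs V E v)" using g unfolding simple_graph_def nbrs_def by auto
  obtain j where j: "j \<in> nbrs V E v" "x j > 0" using P unfolding Pset_def by auto
  have ne: "nbrs V E v \<noteq> {}" using j by auto
  have "Max (x ` nbrs V E v) \<in> x ` nbrs V E v" using fin ne by (intro Max_in) auto
  then obtain m where m: "m \<in> nbrs V E v" "x m = Max (x ` nbrs V E v)" by force
  have "x j \<le> x m" using m j fin by simp
  hence mpos: "x m > 0" using j by simp
  have sv: "set (\<sigma> v) = nbrs V E v" using s v unfolding prefs_def by auto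
  have mL: "m \<in> Lset V E x v" using m unfolding Lset_def by auto
  show fne: "filter (\<lambda>i. i \<in> Lset V E x v) (\<sigma> v) \<noteq> []"
    using mL m sv by (auto simp: filter_empty_conv)
  have "pML V E x v \<sigma> \<in> set (filter (\<lambda>i. i \<in> Lset V E x v) (\<sigma> v))"
    unfolding pML_def using fne hd_in_set by blast
  thus L: "pML V E x v \<sigma> \<in> Lset V E x v" and N: "pML V E x v \<sigma> \<in> nbrs V E v"
    using sv by auto
  show "x (pML V E x v \<sigma>) > 0" using L m mpos unfolding Lset_def by auto
qed

theorem mainTheorem7:
  fixes V :: "'v set" and E :: "'v \<Rightarrow> 'v \<Rightarrow> bool"
  assumes "simple_graph V E" and "connected_graph V E"
    and "x \<in> states V E" and "x' \<in> states V E"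
    and "v \<in> V" and "\<sigma> \<in> prefs V E"
  shows "diff1 V (ml_step V E x' v \<sigma>) (ml_step V E x v \<sigma>) \<le> diff1 V x' x"
proof -
  note g = assms(1) and s = assms(6) and v = assms(5)
  have fin: "finite V" using g unfolding simple_graph_def by auto
  have irr: "\<And>i. \<not> E i i" using g unfolding simple_graph_def by auto
  have sx: "\<And>i j. E i j \<Longrightarrow> x i * x j = 0" using assms(3) unfolding states_def by auto
  have sx': "\<And>i j. E i j \<Longrightarrow> x' i * x' j = 0" using assms(4) unfolding states_def by auto
  define y where "y = ml_step V E x v \<sigma>"
  define y' where "y' = ml_step V E x' v \<sigma>"
  define d where "d i = \<bar>int (y' i) - int (y i)\<bar> - \<bar>int (x' i) - int (x i)\<bar>" for i
  have eq: "diff1 V y' y - diff1 V x' x = sum d V"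
    unfolding diff1_def d_def by (simp add: sum_subtractf)
  have "sum d V \<le> 0"
  proof (cases "Pset V E x v = {}")
    case True note Px = True
    show ?thesis
    proof (cases "Pset V E x' v = {}")
      case True
      have "\<forall>i\<in>V. d i = 0" using Px True unfolding d_def y_def y'_def ml_step_def by auto
      thus ?thesis by simp
    next
      case False
      define p where "p = pML V E x' v \<sigma>"
      note pp = pML_props[OF g s v False, folded p_def]
      have Evp: "E v p" and pV: "p \<in> V" using pp(1) unfolding nbrs_def by auto
      have pv: "p \<noteq> v" using Evp irr by auto
      have x'v: "x' v = 0" using sx'[OF Evp] pp(3) by simp
      have xp: "x p = 0" using Px pp(1) unfolding Pset_def by auto
      have y: "y = x(v := x v + 1)" using Px unfolding y_def ml_step_def by simp
      have y': "y' = x'(p := x' p - 1)" using False unfolding y'_def ml_step_def p_def by (simp add: Let_def)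
      have "sum d V = d v + d p"
        by (rule sum_two[OF fin v pV pv[symmetric]]) (auto simp: d_def y y')
      also have "\<dots> = 0" using pv x'v xp pp(3) by (simp add: d_def y y')
      finally show ?thesis by simp
    qed
  next
    case False note Px = False
    define p where "p = pML V E x v \<sigma>"
    note pp = pML_props[OF g s v False, folded p_def]
    have Evp: "E v p" and pV: "p \<in> V" using pp(1) unfolding nbrs_def by auto
    have pv: "p \<noteq> v" using Evp irr by auto
    have y: "y = x(p := x p - 1)" using False unfolding y_def ml_step_def p_def by (simp add: Let_def)
    show ?thesis
    proof (cases "Pset V E x' v = {}")
      case True
      have xv: "x v = 0" using sx[OF Evp] pp(3) by simp
      have x'p: "x' p = 0" using True pp(1) unfolding Pset_def by auto
      have y': "y' = x'(v := x' v + 1)" using True unfolding y'_def ml_step_def by simp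
      have "sum d V = d v + d p"
        by (rule sum_two[OF fin v pV pv[symmetric]]) (auto simp: d_def y y')
      also have "\<dots> = 0" using pv xv x'p pp(3) by (simp add: d_def y y')
      finally show ?thesis by simp
    next
      case False
      define q where "q = pML V E x' v \<sigma>"
      note qq = pML_props[OF g s v False, folded q_def]
      have qV: "q \<in> V" using qq(1) unfolding nbrs_def by auto
      have y': "y' = x'(q := x' q - 1)" using False unfolding y'_def ml_step_def q_def by (simp add: Let_def)
      show ?thesis
      proof (cases "p = q")
        case True
        have "sum d V = d p"
          by (rule sum_one[OF fin pV]) (auto simp: d_def y y' True)
        also have "\<dots> = 0" using pp(3) qq(3) True by (simp add: d_def y y')
        finally show ?thesis by simp
      next
        case pq: False
        have fin2: "finite (nbrs V E v)" using fin unfolding nbrs_def by auto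
        have mp: "x p = Max (x ` nbrs V E v)" using pp(2) unfolding Lset_def by auto
        have mq: "x' q = Max (x' ` nbrs V E v)" using qq(2) unfolding Lset_def by auto
        have "x' p < x p \<or> x' q > x q"
        proof (rule ccontr)
          assume "\<not> ?thesis"
          hence a: "x' p \<ge> x p" "x' q \<le> x q" by auto
          have "x q \<le> x p" using mp fin2 qq(1) by simp
          moreover have "x' p \<le> x' q" using mq fin2 pp(1) by simp
          ultimately have e1: "x q = x p" and e2: "x' p = x' q" using a by auto
          have qL: "q \<in> Lset V E x v" using e1 mp qq(1) unfolding Lset_def by auto
          have pL: "p \<in> Lset V E x' v" using e2 mq pp(1) unfolding Lset_def by auto
          have "p = q" unfolding p_def q_def pML_def
            by (rule hd_filter_eq) (use pp(4) qq(4) qL pL in \<open>auto simp: p_def q_def pML_def\<close>)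
          thus False using pq by simp
        qed
        have "sum d V = d p + d q"
          by (rule sum_two[OF fin pV qV pq]) (auto simp: d_def y y')
        also have "\<dots> \<le> 0" using pq pp(3) qq(3) \<open>x' p < x p \<or> x' q > x q\<close>
          by (auto simp: d_def y y')
        finally show ?thesis .
      qed
    qed
  qed
  thus ?thesis using eq unfolding y_def y'_def by simp
qed

end
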